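(* Let $p$ be a prime, $q=p^r$ with $r\in\mathbb{Z}^+$, and let $d\neq p$ be a prime such that $q\not\equiv 1\pmod{d}$. Then for all integers $a$ with $1\le a\le q-2$ and all integers $i$ with $0\le i\le r-1$, $$d\left\lfloor\frac{ap^i}{q-1}\right\rfloor+\left\lfloor\frac{-dap^i}{q-1}\right\rfloor=(d-1)\left\lfloor\frac{ap^i}{q-1}\right\rfloor+\sum_{h=1}^{d-1}\left\lfloor\left\langle\frac{hp^i}{d}\right\rangle-\frac{ap^i}{q-1}\right\rfloor-1.$$
   Context: For $x\in\mathbb{Q}$, $\lfloor x\rfloor$ denotes the greatest integer less than or equal to $x$, and $\langle x\rangle=x-\lfloor x\rfloor$ denotes its fractional part. *)

theory Defs
  imports Complex_Main "HOL-Computational_Algebra.Primes"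
begin

end

theory Submission imports Defs begin

lemma fl_div:
  fixes y :: rat and n :: int
  assumes n: "n > 0"
  shows "\<lfloor>y / of_int n\<rfloor> = \<lfloor>y\<rfloor> div n"
proof (rule floor_unique)
  define m where "m = \<lfloor>y\<rfloor>"
  have e: "m = n * (m div n) + m mod n" by simp
  have r: "0 \<le> m mod n" "m mod n \<le> n - 1" using n by auto
  have y1: "of_int m \<le> y" "y < of_int m + 1" unfolding m_def by linarith+
  have "of_int (n * (m div n)) \<le> y" proof -
    have "n * (m div n) \<le> m" using e r by linarith
    hence "(of_int (n * (m div n)) :: rat) \<le> of_int m" by (simp only: of_int_le_iff)
    thus ?thesis using y1 by linarith
  qed
  then show "of_int (\<lfloor>y\<rfloor> div n) \<le> y / of_int n"
    using n unfolding m_def by (simp add: pos_le_divide_eq mult.commute)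
  have "of_int m + 1 \<le> (of_int (n * (m div n) + n) :: rat)"
    proof -
    have "m + 1 \<le> n * (m div n) + n" using e r by linarith
    hence "(of_int (m+1) :: rat) \<le> of_int (n * (m div n) + n)" by (simp only: of_int_le_iff)
    thus ?thesis by simp
  qed
  hence "y < of_int (n * (m div n)) + of_int n" using y1 by simp
  then show "y / of_int n < of_int (\<lfloor>y\<rfloor> div n) + 1"
    using n unfolding m_def by (simp add: pos_divide_less_eq algebra_simps)
qed

lemma sumdiv_int:
  fixes n :: nat assumes "n > 0"
  shows "(\<Sum>k<n. (m + int k) div int n) = m"
proof (induction m rule: int_induct[where k=0])
  case base
  have "(\<Sum>k<n. (0 + int k) div int n) = (\<Sum>k<n. 0)"
    by (rule sum.cong) auto
  then show ?case by simp
next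
  case (step1 i)
  obtain n' where n': "n = Suc n'" using assms by (cases n) auto
  let ?g = "\<lambda>k::nat. (i + int k) div int n"
  have "(\<Sum>k<n. (i + 1 + int k) div int n) = (\<Sum>k<n. ?g (Suc k))"
    by (rule sum.cong) (auto simp: algebra_simps)
  also have "\<dots> = (\<Sum>k<n'. ?g (Suc k)) + ?g n" unfolding n' by simp
  also have "(\<Sum>k<n. ?g k) = ?g 0 + (\<Sum>k<n'. ?g (Suc k))" unfolding n' by (rule sum.lessThan_Suc_shift)
  hence "(\<Sum>k<n'. ?g (Suc k)) = i - ?g 0" using step1 by simp
  moreover have "?g n = ?g 0 + 1" using assms by (simp add: add.commute)
  ultimately show ?case by simp
next
  case (step2 i)
  obtain n' where n': "n = Suc n'" using assms by (cases n) auto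
  let ?g = "\<lambda>k::nat. (i - 1 + int k) div int n"
  have "(\<Sum>k<n. (i + int k) div int n) = (\<Sum>k<n. ?g (Suc k))"
    by (rule sum.cong) auto
  also have "\<dots> = (\<Sum>k<n'. ?g (Suc k)) + ?g n" unfolding n' by simp
  finally have A: "(\<Sum>k<n'. ?g (Suc k)) + ?g n = i" using step2 by simp
  have "(\<Sum>k<n. ?g k) = ?g 0 + (\<Sum>k<n'. ?g (Suc k))" unfolding n' by (rule sum.lessThan_Suc_shift)
  moreover have "?g n = ?g 0 + 1" using assms by (simp add: add.commute)
  ultimately show ?case using A by simp
qed

lemma hermite:
  fixes n :: nat and z :: rat assumes "n > 0"
  shows "(\<Sum>k<n. \<lfloor>z + of_nat k / of_nat n\<rfloor>) = \<lfloor>of_nat n * z\<rfloor>"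
proof -
  have "(\<Sum>k<n. \<lfloor>z + of_nat k / of_nat n\<rfloor>) = (\<Sum>k<n. (\<lfloor>of_nat n * z\<rfloor> + int k) div int n)"
  proof (rule sum.cong)
    fix k assume "k \<in> {..<n}"
    have "z + of_nat k / of_nat n = (of_nat n * z + of_int (int k)) / of_int (int n)"
      using assms by (simp add: field_simps)
    hence "\<lfloor>z + of_nat k / of_nat n\<rfloor> = \<lfloor>of_nat n * z + of_int (int k)\<rfloor> div int n"
      using fl_div[of "int n"] assms by simp
    then show "\<lfloor>z + of_nat k / of_nat n\<rfloor> = (\<lfloor>of_nat n * z\<rfloor> + int k) div int n" by simp
  qed simp
  also have "\<dots> = \<lfloor>of_nat n * z\<rfloor>" by (rule sumdiv_int[OF assms])
  finally show ?thesis .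
qed


lemma fracmod:
  fixes m n :: int assumes "n > 0"
  shows "frac (of_int m / of_int n :: rat) = of_int (m mod n) / of_int n"
proof -
  have "(of_int m / of_int n :: rat) = of_int (m div n) + of_int (m mod n) / of_int n"
  proof -
    have "(of_int m :: rat) = of_int (n * (m div n) + m mod n)" by simp
    also have "\<dots> = of_int n * of_int (m div n) + of_int (m mod n)" by (simp only: of_int_add of_int_mult)
    finally show ?thesis using assms by (simp add: field_simps)
  qed
  hence "frac (of_int m / of_int n :: rat) = frac (of_int (m mod n) / of_int n)" by simp
  also have "\<dots> = of_int (m mod n) / of_int n"
    using assms by (intro frac_eq_id) (auto simp: divide_simps)
  finally show ?thesis .
qed

lemma int_img: "int ` {..<d} = {0..int d - 1}"
proof
  show "{0..int d - 1} \<subseteq> int ` {..<d}"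
  proof
    fix x assume "x \<in> {0..int d - 1}"
    hence "x = int (nat x)" "nat x < d" by auto
    thus "x \<in> int ` {..<d}" by blast
  qed
qed auto

theorem lemma3p2:
  fixes p r d q :: nat and a :: int and i :: nat
  assumes "prime p" and "r > 0" and "q = p ^ r"
    and "prime d" and "d \<noteq> p" and "q mod d \<noteq> 1 mod d"
    and "1 \<le> a" and "a \<le> int q - 2"
    and "i \<le> r - 1"
  shows "int d * floor ((of_int a * of_nat p ^ i / (of_nat q - 1) :: rat))
           + floor ((- of_nat d * of_int a * of_nat p ^ i / (of_nat q - 1) :: rat))
         = (int d - 1) * floor ((of_int a * of_nat p ^ i / (of_nat q - 1) :: rat))
           + (\<Sum>h\<in>{1..int d - 1}.
                floor (frac ((of_int h * of_nat p ^ i) / of_nat d :: rat)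
                   - (of_int a * of_nat p ^ i) / (of_nat q - 1)))
           - 1"
proof -
  define P where "P = int (p ^ i)"
  define D where "D = int q - 1"
  define x where "x = (of_int a * of_nat p ^ i / (of_nat q - 1) :: rat)"
  have d0: "d > 0" using assms(4) prime_gt_0_nat by blast
  have D0: "D > 0" using assms(7,8) unfolding D_def by linarith
  have xD: "x = of_int (a * P) / of_int D" unfolding x_def P_def D_def by simp
  have cop: "coprime D P"
  proof -
    have "coprime D (int q)" unfolding D_def by simp
    hence "coprime D (int p ^ r)" using assms(3) by simp
    hence "coprime D (int p)" using assms(2) by (simp add: coprime_power_right_iff)
    thus ?thesis unfolding P_def by (simp add: coprime_power_right_iff)
  qed
  have nint: "of_int \<lfloor>x\<rfloor> < x"
  proof (rule ccontr)
    assume "\<not> of_int \<lfloor>x\<rfloor> < x"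
    hence "of_int \<lfloor>x\<rfloor> = x" by linarith
    hence "(of_int \<lfloor>x\<rfloor> :: rat) * of_int D = x * of_int D" by simp
    also have "x * of_int D = of_int (a * P)" using xD D0 by simp
    finally have "(of_int \<lfloor>x\<rfloor> :: rat) * of_int D = of_int (a * P)" .
    hence "\<lfloor>x\<rfloor> * D = a * P" by (metis of_int_eq_iff of_int_mult)
    hence "D dvd a * P" by (metis dvd_triv_right)
    hence "D dvd a" using cop by (simp add: coprime_dvd_mult_left_iff)
    hence "D \<le> a" using assms(7) by (simp add: zdvd_imp_le)
    thus False using assms(8) unfolding D_def by linarith
  qed
  have fm: "\<lfloor>-x\<rfloor> = - \<lfloor>x\<rfloor> - 1"
    by (rule floor_unique) (use nint in \<open>auto, linarith\<close>)
  have copd: "coprime (int d) P"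
  proof -
    have "coprime d p" using assms(1,4,5) by (simp add: primes_coprime)
    hence "coprime (int d) (int p)" by simp
    thus ?thesis unfolding P_def by (simp add: coprime_power_right_iff)
  qed
  define f where "f h = (h * P) mod int d" for h
  have bij: "bij_betw f {1..int d - 1} {1..int d - 1}"
  proof -
    have inj: "inj_on f {1..int d - 1}"
    proof
      fix h1 h2 assume h: "h1 \<in> {1..int d - 1}" "h2 \<in> {1..int d - 1}" and "f h1 = f h2"
      hence "int d dvd h1 * P - h2 * P" unfolding f_def by (metis mod_eq_dvd_iff)
      hence "int d dvd (h1 - h2) * P" by (simp add: left_diff_distrib)
      hence "int d dvd (h1 - h2)" using copd by (simp add: coprime_dvd_mult_left_iff)
      then obtain c where c: "h1 - h2 = int d * c" by blast
      show "h1 = h2"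
      proof (cases "c = 0")
        case False
        hence "\<bar>int d * c\<bar> \<ge> int d" using d0 by (simp add: abs_mult)
        thus ?thesis using c h by auto
      qed (use c in auto)
    qed
    have sub: "f ` {1..int d - 1} \<subseteq> {1..int d - 1}"
    proof
      fix y assume "y \<in> f ` {1..int d - 1}"
      then obtain h where h: "h \<in> {1..int d - 1}" "y = f h" by blast
      have "\<not> int d dvd h" using h(1) by (auto dest: zdvd_imp_le)
      hence "\<not> int d dvd h * P" using copd by (simp add: coprime_dvd_mult_left_iff)
      hence "y \<noteq> 0" using h(2) unfolding f_def by (simp add: dvd_eq_mod_eq_0)
      moreover have "0 \<le> y" "y < int d" using h(2) d0 unfolding f_def by auto
      ultimately show "y \<in> {1..int d - 1}" by auto
    qed
    show ?thesis unfolding bij_betw_def using inj endo_inj_surj[OF _ sub inj] by simp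
  qed
  define g where "g k = \<lfloor>of_int k / of_int (int d) - x\<rfloor>" for k
  have S1: "(\<Sum>h\<in>{1..int d - 1}.
                floor (frac ((of_int h * of_nat p ^ i) / of_nat d :: rat)
                   - (of_int a * of_nat p ^ i) / (of_nat q - 1)))
          = (\<Sum>h\<in>{1..int d - 1}. g (f h))"
  proof (rule sum.cong)
    fix h assume "h \<in> {1..int d - 1}"
    have "frac ((of_int h * of_nat p ^ i) / of_nat d :: rat) = frac (of_int (h * P) / of_int (int d))"
      unfolding P_def by simp
    also have "\<dots> = of_int (f h) / of_int (int d)" unfolding f_def using d0 fracmod[of "int d" "h * P"] by simp
    finally show "floor (frac ((of_int h * of_nat p ^ i) / of_nat d :: rat)
                   - (of_int a * of_nat p ^ i) / (of_nat q - 1)) = g (f h)"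
      unfolding g_def x_def by simp
  qed simp
  also have "\<dots> = (\<Sum>k\<in>{1..int d - 1}. g k)" by (rule sum.reindex_bij_betw[OF bij])
  finally have S1' : "(\<Sum>h\<in>{1..int d - 1}.
                floor (frac ((of_int h * of_nat p ^ i) / of_nat d :: rat)
                   - (of_int a * of_nat p ^ i) / (of_nat q - 1)))
          = (\<Sum>k\<in>{1..int d - 1}. g k)" .
  have "(\<Sum>k<d. g (int k)) = (\<Sum>k<d. \<lfloor>-x + of_nat k / of_nat d\<rfloor>)"
    unfolding g_def by simp
  also have "\<dots> = \<lfloor>of_nat d * (-x)\<rfloor>" by (rule hermite[OF d0])
  finally have H: "(\<Sum>k<d. g (int k)) = \<lfloor>of_nat d * (-x)\<rfloor>" .
  have "(\<Sum>k<d. g (int k)) = (\<Sum>k\<in>int ` {..<d}. g k)"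
    by (simp add: sum.reindex)
  also have "\<dots> = (\<Sum>k\<in>{0..int d - 1}. g k)" by (simp add: int_img)
  also have "{0..int d - 1} = insert 0 {1..int d - 1}" using d0 by auto
  also have "(\<Sum>k\<in>insert 0 {1..int d - 1}. g k) = g 0 + (\<Sum>k\<in>{1..int d - 1}. g k)"
    by (subst sum.insert) auto
  finally have S2: "(\<Sum>k\<in>{1..int d - 1}. g k) = \<lfloor>of_nat d * (-x)\<rfloor> - g 0" using H by simp
  have g0: "g 0 = - \<lfloor>x\<rfloor> - 1" unfolding g_def using fm by simp
  have L: "(- of_nat d * of_int a * of_nat p ^ i / (of_nat q - 1) :: rat) = of_nat d * (-x)"
    unfolding x_def by simp
  show ?thesis unfolding S1' L S2 g0 unfolding x_def[symmetric] by (simp add: algebra_simps)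
qed

end
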